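(* Let $L$ be a homogeneous Lévy basis on $\mathbb{R}^k$ whose associated infinitely divisible law $\mu$ (with triplet $(\gamma,b,\nu)$) is not $\delta_0$. Let $T$ and $\tilde T$ be non-negative Lévy bases on $\mathbb{R}^k$ with continuous control measures, each independent of $L$, and let $L_T$, $L_{\tilde T}$ be the corresponding subordinated Lévy bases. If $L_T\overset{d}{=}L_{\tilde T}$ (equality of finite-dimensional laws as random fields indexed by bounded Borel sets), then $T\overset{d}{=}\tilde T$.
   Context: A Lévy basis on $\mathbb{R}^k$ is a family $\{L(A):A\in\mathcal{B}_b(\mathbb{R}^k)\}$ (bounded Borel sets) of random variables which is independently scattered (values on disjoint sets are independent, and $L(\cup_n A_n)=\sum_n L(A_n)$ a.s. for disjoint $A_n$ with bounded union) and such that each $L(A)$ is infinitely divisible. It has a characteristic quadruplet $(\gamma(s),b(s),\nu(s,\cdot),c)$ with $\log\mathbb{E}e^{izL(A)}=\int_A\psi(z,s)c(ds)$, $\psi(z,s)=iz\gamma(s)-\frac12b(s)z^2+\int(e^{izx}-1-izx\mathbf 1_{\{|x|\le1\}})\nu(s,dx)$; $c$ is the control measure. $L$ is homogeneous with triplet $(\gamma,b,\nu)$ if these do not depend on $s$ and $c$ is Lebesgue measure, in which case $L(A)\sim\mu^{\mathrm{Leb}(A)}$ where $\mu$ is the ID law of $(\gamma,b,\nu)$ and $\mu^t$ has characteristic function $\hat\mu^{\,t}$. A non-negative Lévy basis $T$ (with continuous control measure) is one for which almost surely $T(\omega,\cdot)$ is a measure; it can be extended to all Borel sets. Subordination: for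 almost every $\omega$, $T(\omega,\cdot)$ is a measure finite on bounded sets and (assumed) vanishing on $\{x:x_i=0\text{ for some }i\}$, so there is a measurable $\phi_\omega:\mathbb{R}^k\to\mathbb{R}^k$ with $T(\omega,A)=\mathrm{Leb}(\phi_\omega^{-1}(A))$; with the meta-time $\varphi(\omega,A)=\phi_\omega^{-1}(A)$, define $L_T(\omega,A)=L(\omega,\varphi(\omega,A))$ for $A\in\mathcal{B}_b(\mathbb{R}^k)$. Then $L_T$ is a Lévy basis with $\mathcal{L}(L_T(A)\mid T)=\mu^{T(A)}$. *)

theory Defs
  imports "HOL-Probability.Probability"
begin

text \<open>Bounded Borel subsets of R^k (points are real^'n, with 'n a finite index type of size k).\<close>
definition bborel :: "(real^'n) set set" where
  "bborel = {A. A \<in> sets borel \<and> bounded A}"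

fun conv_pow :: "real measure \<Rightarrow> nat \<Rightarrow> real measure" where
  "conv_pow \<rho> 0 = return borel 0"
| "conv_pow \<rho> (Suc n) = convolution \<rho> (conv_pow \<rho> n)"

definition infinitely_divisible :: "real measure \<Rightarrow> bool" where
  "infinitely_divisible \<mu> \<longleftrightarrow> prob_space \<mu> \<and> sets \<mu> = sets borel \<and>
     (\<forall>n>0. \<exists>\<rho>. prob_space \<rho> \<and> sets \<rho> = sets borel \<and> conv_pow \<rho> n = \<mu>)"

definition levy_measure :: "real measure \<Rightarrow> bool" where
  "levy_measure \<nu> \<longleftrightarrow> sets \<nu> = sets borel \<and> emeasure \<nu> {0} = 0 \<and>
     (\<integral>\<^sup>+ x. ennreal (min 1 (x\<^sup>2)) \<partial>\<nu>) < \<infinity>"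

definition levy_exponent :: "real \<Rightarrow> real \<Rightarrow> real measure \<Rightarrow> real \<Rightarrow> complex" where
  "levy_exponent \<gamma> b \<nu> z =
     \<i> * complex_of_real (z * \<gamma>) - complex_of_real (b * z\<^sup>2 / 2)
     + (CLINT x|\<nu>. iexp (z * x) - 1 - \<i> * complex_of_real (z * x) * indicator {-1..1} x)"

definition id_law_of_triplet :: "real measure \<Rightarrow> real \<Rightarrow> real \<Rightarrow> real measure \<Rightarrow> bool" where
  "id_law_of_triplet \<mu> \<gamma> b \<nu> \<longleftrightarrow> prob_space \<mu> \<and> sets \<mu> = sets borel \<and>
     (\<forall>z. char \<mu> z = exp (levy_exponent \<gamma> b \<nu> z))"

definition independently_scattered :: "'w measure \<Rightarrow> ('w \<Rightarrow> (real^'n) set \<Rightarrow> real) \<Rightarrow> bool" where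
  "independently_scattered M X \<longleftrightarrow>
     (\<forall>(A :: nat \<Rightarrow> (real^'n) set) n. (\<forall>i<n. A i \<in> bborel) \<longrightarrow> disjoint_family_on A {..<n} \<longrightarrow>
        prob_space.indep_vars M (\<lambda>_. borel) (\<lambda>i \<omega>. X \<omega> (A i)) {..<n}) \<and>
     (\<forall>A :: nat \<Rightarrow> (real^'n) set. range A \<subseteq> bborel \<longrightarrow> disjoint_family A \<longrightarrow> bounded (\<Union>n. A n) \<longrightarrow>
        (AE \<omega> in M. (\<lambda>n. X \<omega> (A n)) sums X \<omega> (\<Union>n. A n)))"

definition levy_basis :: "'w measure \<Rightarrow> ('w \<Rightarrow> (real^'n) set \<Rightarrow> real) \<Rightarrow> bool" where
  "levy_basis M X \<longleftrightarrow> prob_space M \<and>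
     (\<forall>A\<in>bborel. (\<lambda>\<omega>. X \<omega> A) \<in> borel_measurable M) \<and>
     independently_scattered M X \<and>
     (\<forall>A\<in>bborel. infinitely_divisible (distr M borel (\<lambda>\<omega>. X \<omega> A)))"

definition has_quadruplet ::
  "'w measure \<Rightarrow> ('w \<Rightarrow> (real^'n) set \<Rightarrow> real) \<Rightarrow> (real^'n \<Rightarrow> real) \<Rightarrow> (real^'n \<Rightarrow> real)
    \<Rightarrow> (real^'n \<Rightarrow> real measure) \<Rightarrow> (real^'n) measure \<Rightarrow> bool" where
  "has_quadruplet M X \<gamma> b \<nu> c \<longleftrightarrow>
     sets c = sets borel \<and> (\<forall>A\<in>bborel. emeasure c A < \<infinity>) \<and>
     \<gamma> \<in> borel_measurable borel \<and> b \<in> borel_measurable borel \<and> (\<forall>s. b s \<ge> 0) \<and>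
     (\<forall>s. levy_measure (\<nu> s)) \<and> (\<forall>B\<in>sets borel. (\<lambda>s. emeasure (\<nu> s) B) \<in> borel_measurable borel) \<and>
     (\<forall>A\<in>bborel. \<forall>z.
        set_integrable c A (\<lambda>s. levy_exponent (\<gamma> s) (b s) (\<nu> s) z) \<and>
        char (distr M borel (\<lambda>\<omega>. X \<omega> A)) z
          = exp (set_lebesgue_integral c A (\<lambda>s. levy_exponent (\<gamma> s) (b s) (\<nu> s) z)))"

definition continuous_control_measure :: "'w measure \<Rightarrow> ('w \<Rightarrow> (real^'n) set \<Rightarrow> real) \<Rightarrow> bool" where
  "continuous_control_measure M X \<longleftrightarrow>
     (\<exists>\<gamma> b \<nu> c. has_quadruplet M X \<gamma> b \<nu> c \<and> (\<forall>x. emeasure c {x} = 0))"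

definition nonneg_levy_basis :: "'w measure \<Rightarrow> ('w \<Rightarrow> (real^'n) set \<Rightarrow> real) \<Rightarrow> bool" where
  "nonneg_levy_basis M T \<longleftrightarrow> levy_basis M T \<and>
     (AE \<omega> in M. (\<forall>A\<in>bborel. T \<omega> A \<ge> 0) \<and>
        (\<forall>A :: nat \<Rightarrow> (real^'n) set. range A \<subseteq> bborel \<longrightarrow> disjoint_family A \<longrightarrow> bounded (\<Union>n. A n) \<longrightarrow>
           (\<lambda>n. T \<omega> (A n)) sums T \<omega> (\<Union>n. A n)))"

text \<open>Homogeneous Levy basis with triplet (gamma, b, nu): L(A) ~ mu^{Leb(A)}.\<close>
definition homogeneous_levy_basis ::
  "'w measure \<Rightarrow> ('w \<Rightarrow> (real^'n) set \<Rightarrow> real) \<Rightarrow> real \<Rightarrow> real \<Rightarrow> real measure \<Rightarrow> bool" where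
  "homogeneous_levy_basis M L \<gamma> b \<nu> \<longleftrightarrow> levy_basis M L \<and> b \<ge> 0 \<and> levy_measure \<nu> \<and>
     (\<forall>A\<in>bborel. \<forall>z. char (distr M borel (\<lambda>\<omega>. L \<omega> A)) z
        = exp (complex_of_real (measure lborel A) * levy_exponent \<gamma> b \<nu> z))"

definition field_sigma :: "'w measure \<Rightarrow> ('w \<Rightarrow> (real^'n) set \<Rightarrow> real) \<Rightarrow> 'w set set" where
  "field_sigma M X = sigma_sets (space M)
     (\<Union>A\<in>bborel. {(\<lambda>\<omega>. X \<omega> A) -` B \<inter> space M | B. B \<in> sets borel})"

definition indep_fields :: "'w measure \<Rightarrow> ('w \<Rightarrow> (real^'n) set \<Rightarrow> real) \<Rightarrow> ('w \<Rightarrow> (real^'n) set \<Rightarrow> real) \<Rightarrow> bool" where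
  "indep_fields M X Y \<longleftrightarrow> prob_space.indep_set M (field_sigma M X) (field_sigma M Y)"

text \<open>L_T is the Levy basis L (exponent psi of its triplet) subordinated by the meta-time given by T:
  L_T is a Levy basis and, conditionally on T, its values on disjoint bounded Borel sets A_1..A_n are
  independent with laws mu^{T(A_j)}, expressed through conditional characteristic functions.
  It also records the standing assumption that T vanishes a.s. on the coordinate hyperplanes.\<close>
definition subordinated ::
  "'w measure \<Rightarrow> real \<Rightarrow> real \<Rightarrow> real measure \<Rightarrow> ('w \<Rightarrow> (real^'n) set \<Rightarrow> real)
     \<Rightarrow> ('w \<Rightarrow> (real^'n) set \<Rightarrow> real) \<Rightarrow> bool" where
  "subordinated M \<gamma> b \<nu> T LS \<longleftrightarrow> levy_basis M LS \<and>
     (AE \<omega> in M. \<forall>A\<in>bborel. A \<subseteq> {x. \<exists>i. x $ i = 0} \<longrightarrow> T \<omega> A = 0) \<and>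
     (\<forall>n (A :: nat \<Rightarrow> (real^'n) set) (z :: nat \<Rightarrow> real) E.
        (\<forall>i<n. A i \<in> bborel) \<longrightarrow> disjoint_family_on A {..<n} \<longrightarrow> E \<in> field_sigma M T \<longrightarrow>
        (CLINT \<omega>|M. indicator E \<omega> * exp (\<i> * complex_of_real (\<Sum>i<n. z i * LS \<omega> (A i))))
        = (CLINT \<omega>|M. indicator E \<omega> *
             exp (\<Sum>i<n. complex_of_real (T \<omega> (A i)) * levy_exponent \<gamma> b \<nu> (z i))))"

definition fdd_eq :: "'w measure \<Rightarrow> ('w \<Rightarrow> (real^'n) set \<Rightarrow> real) \<Rightarrow> ('w \<Rightarrow> (real^'n) set \<Rightarrow> real) \<Rightarrow> bool" where
  "fdd_eq M X Y \<longleftrightarrow>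
     (\<forall>n (A :: nat \<Rightarrow> (real^'n) set). (\<forall>i<n. A i \<in> bborel) \<longrightarrow>
        distr M (PiM {..<n} (\<lambda>_. borel)) (\<lambda>\<omega>. \<lambda>i\<in>{..<n}. X \<omega> (A i))
        = distr M (PiM {..<n} (\<lambda>_. borel)) (\<lambda>\<omega>. \<lambda>i\<in>{..<n}. Y \<omega> (A i)))"

end

theory Submission
  imports Defs "HOL-Complex_Analysis.Complex_Analysis" "HOL-Library.Nat_Bijection"
begin

lemma tendsto_integral_within:
  fixes g :: "'c::metric_space \<Rightarrow> 'a \<Rightarrow> 'b::{banach,second_countable_topology}"
  assumes meas: "\<And>y. y \<in> S \<Longrightarrow> g y \<in> borel_measurable M" "G \<in> borel_measurable M"
    and w: "integrable M w"
    and bound: "\<And>y. y \<in> S \<Longrightarrow> AE x in M. norm (g y x) \<le> w x"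
    and lim: "AE x in M. ((\<lambda>y. g y x) \<longlongrightarrow> G x) (at p within S)"
  shows "((\<lambda>y. integral\<^sup>L M (g y)) \<longlongrightarrow> integral\<^sup>L M G) (at p within S)"
proof (subst tendsto_at_iff_sequentially, intro allI impI)
  fix X assume X: "\<forall>i. X i \<in> S - {p}" "X \<longlonglongrightarrow> p"
  show "((\<lambda>y. integral\<^sup>L M (g y)) \<circ> X) \<longlonglongrightarrow> integral\<^sup>L M G"
    unfolding comp_def
  proof (rule integral_dominated_convergence[where w=w])
    show "AE x in M. (\<lambda>i. g (X i) x) \<longlonglongrightarrow> G x"
      using lim
    proof eventually_elim
      case (elim x)
      then show ?case using X unfolding tendsto_at_iff_sequentially comp_def by blast
    qed
  qed (use meas w bound X in auto)
qed

definition lapl :: "real measure \<Rightarrow> complex \<Rightarrow> complex" where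
  "lapl P w = (CLINT x|P. exp (w * of_real x))"

lemma meas_exp_lin [measurable]:
  assumes "sets P = sets borel"
  shows "(\<lambda>x::real. exp (w * complex_of_real x)) \<in> borel_measurable P"
  using assms by (simp add: measurable_cong_sets[OF assms refl]) 

lemma meas_exp_lin2 [measurable]:
  assumes "sets P = sets borel"
  shows "(\<lambda>x::real. complex_of_real x * exp (w * complex_of_real x)) \<in> borel_measurable P"
  using assms by (simp add: measurable_cong_sets[OF assms refl]) 

lemma lapl_integrable:
  assumes "real_distribution P" "AE x in P. 0 \<le> x" "Re w \<le> 0"
  shows "integrable P (\<lambda>x. exp (w * of_real x))"
proof -
  interpret real_distribution P by fact
  show ?thesis
  proof (rule integrable_const_bound[where B=1])
    show "AE x in P. norm (exp (w * complex_of_real x)) \<le> 1"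
      using assms(2) by eventually_elim (use assms(3) in \<open>auto simp: norm_exp_eq_Re mult_nonpos_nonneg\<close>)
  qed (simp add: meas_exp_lin)
qed


lemma xexp_bound:
  fixes d x :: real assumes "d > 0" "x \<ge> 0"
  shows "x * exp (- d * x) \<le> 1 / d"
proof -
  have "d * x \<le> exp (d * x)" using exp_ge_add_one_self[of "d*x"] by linarith
  hence "d * x * exp (- d * x) \<le> exp (d * x) * exp (- d * x)"
    by (intro mult_right_mono) auto
  also have "\<dots> = 1" by (simp add: exp_minus_inverse)
  finally show ?thesis using assms by (simp add: field_simps)
qed

lemma lapl_deriv:
  assumes P: "real_distribution P" and nn: "AE x in P. 0 \<le> x" and w0: "Re w0 < 0"
  shows "(lapl P has_field_derivative (CLINT x|P. of_real x * exp (w0 * of_real x))) (at w0)"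
proof -
  interpret real_distribution P by fact
  define d where "d = - Re w0 / 2"
  have d: "d > 0" using w0 by (simp add: d_def)
  define S where "S = ball w0 d"
  have S: "open S" "w0 \<in> S" using d by (auto simp: S_def)
  have ReS: "Re h \<le> - d" if "h \<in> S" for h
  proof -
    have "\<bar>Re h - Re w0\<bar> \<le> cmod (h - w0)" using abs_Re_le_cmod[of "h - w0"] by simp
    also have "\<dots> < d" using that by (simp add: S_def dist_norm norm_minus_commute)
    finally show ?thesis by (simp add: d_def)
  qed
  define g where "g h x = (exp (h * of_real x) - exp (w0 * of_real x)) / (h - w0)" for h x
  have int: "integrable P (\<lambda>x. exp (h * of_real x))" if "h \<in> S" for h
    using lapl_integrable[OF P nn] ReS[OF that] d by simp
  have int0: "integrable P (\<lambda>x. exp (w0 * of_real x))"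
    using lapl_integrable[OF P nn] w0 by simp
  have eq: "(lapl P h - lapl P w0) / (h - w0) = integral\<^sup>L P (g h)" if "h \<in> S" for h
    unfolding lapl_def g_def
    by (simp only: integral_divide_zero Bochner_Integration.integral_diff[OF int[OF that] int0])
  have bnd: "cmod (g h x) \<le> 1 / d" if "h \<in> S" "x \<ge> 0" for h x
  proof (cases "h = w0")
    case True thus ?thesis using d by (simp add: g_def)
  next
    case False
    have "cmod (exp (h * of_real x) - exp (w0 * of_real x)) \<le> (x * exp (- d * x)) * cmod (h - w0)"
    proof (rule field_differentiable_bound[where f="\<lambda>h. exp (h * of_real x)" and S=S])
      show "convex S" by (simp add: S_def)
      show "((\<lambda>h. exp (h * of_real x)) has_field_derivative of_real x * exp (z * of_real x)) (at z within S)" for z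
        by (auto intro!: derivative_eq_intros)
      show "cmod (of_real x * exp (z * of_real x)) \<le> x * exp (- d * x)" if "z \<in> S" for z
      proof -
        have "Re z * x \<le> - d * x" using ReS[OF that] \<open>x \<ge> 0\<close> by (intro mult_right_mono) auto
        thus ?thesis using \<open>x \<ge> 0\<close> by (simp add: norm_mult norm_exp_eq_Re mult_left_mono)
      qed
    qed (use that S in auto)
    also have "\<dots> \<le> (1 / d) * cmod (h - w0)"
      by (intro mult_right_mono xexp_bound) (use d that in auto)
    finally show ?thesis using False by (simp add: g_def norm_divide divide_le_eq)
  qed
  have "((\<lambda>h. integral\<^sup>L P (g h)) \<longlongrightarrow> (CLINT x|P. of_real x * exp (w0 * of_real x))) (at w0 within S)"
  proof (rule tendsto_integral_within[where w="\<lambda>_. 1 / d"])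
    show "g h \<in> borel_measurable P" if "h \<in> S" for h
      unfolding g_def by (simp add: measurable_cong_sets[OF events_eq_borel refl])
    show "(\<lambda>x. complex_of_real x * exp (w0 * complex_of_real x)) \<in> borel_measurable P"
      by (simp add: measurable_cong_sets[OF events_eq_borel refl])
    show "integrable P (\<lambda>_. 1 / d)" by simp
    show "AE x in P. cmod (g h x) \<le> 1 / d" if "h \<in> S" for h
      using nn by eventually_elim (use bnd that in auto)
    show "AE x in P. ((\<lambda>h. g h x) \<longlongrightarrow> complex_of_real x * exp (w0 * complex_of_real x)) (at w0 within S)"
    proof (intro AE_I2)
      fix x :: real
      have "((\<lambda>h. exp (h * of_real x)) has_field_derivative of_real x * exp (w0 * of_real x)) (at w0 within S)"
        by (auto intro!: derivative_eq_intros)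
      thus "((\<lambda>h. g h x) \<longlongrightarrow> complex_of_real x * exp (w0 * complex_of_real x)) (at w0 within S)"
        unfolding has_field_derivative_iff g_def .
    qed
  qed
  hence "((\<lambda>h. (lapl P h - lapl P w0) / (h - w0)) \<longlongrightarrow> (CLINT x|P. of_real x * exp (w0 * of_real x))) (at w0 within S)"
    by (rule Lim_transform_within[where d=1]) (use eq in auto)
  hence "(lapl P has_field_derivative (CLINT x|P. of_real x * exp (w0 * of_real x))) (at w0 within S)"
    unfolding has_field_derivative_iff .
  thus ?thesis using at_within_open[OF S(2,1)] by simp
qed

lemma lapl_holo:
  assumes P: "real_distribution P" and nn: "AE x in P. 0 \<le> x"
  shows "lapl P holomorphic_on {w. Re w < 0}"
  using lapl_deriv[OF P nn] by (subst holomorphic_on_open) (auto simp: open_halfspace_Re_lt)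


lemma char_as_lapl_limit:
  assumes P: "real_distribution P" and nn: "AE x in P. 0 \<le> x"
  shows "(\<lambda>k. lapl P (complex_of_real (- 1 / Suc k) + \<i> * complex_of_real t)) \<longlonglongrightarrow> char P t"
proof -
  interpret real_distribution P by fact
  show ?thesis
    unfolding lapl_def char_def
  proof (rule integral_dominated_convergence[where w="\<lambda>_. 1"])
    show "AE x in P. (\<lambda>k. exp ((complex_of_real (- 1 / Suc k) + \<i> * complex_of_real t) * complex_of_real x))
        \<longlonglongrightarrow> iexp (t * x)"
    proof (intro AE_I2)
      fix x :: real
      have c: "isCont (\<lambda>e. exp ((e + \<i> * complex_of_real t) * complex_of_real x)) (complex_of_real (- 0))"
        by (auto intro!: continuous_intros)
      have lim0: "(\<lambda>k. complex_of_real (- 1 / Suc k)) \<longlonglongrightarrow> complex_of_real (- 0)"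
        using tendsto_of_real[OF tendsto_minus[OF LIMSEQ_inverse_real_of_nat], where 'a=complex] by (simp add: divide_inverse)
      have "(\<lambda>k. exp ((complex_of_real (- 1 / Suc k) + \<i> * complex_of_real t) * complex_of_real x))
        \<longlonglongrightarrow> exp ((complex_of_real (- 0) + \<i> * complex_of_real t) * complex_of_real x)"
        using isCont_tendsto_compose[OF c lim0] by simp
      thus "(\<lambda>k. exp ((complex_of_real (- 1 / Suc k) + \<i> * complex_of_real t) * complex_of_real x))
        \<longlonglongrightarrow> iexp (t * x)" by (simp add: mult.assoc)
    qed
    show "AE x in P. cmod (exp ((complex_of_real (- 1 / Suc k) + \<i> * complex_of_real t) * complex_of_real x)) \<le> 1" for k
      using nn by eventually_elim (auto simp: norm_exp_eq_Re field_simps)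
  qed (auto simp: measurable_cong_sets[OF events_eq_borel refl])
qed

lemma lapl_unique:
  assumes P: "real_distribution P" and nnP: "AE x in P. 0 \<le> x"
    and Q: "real_distribution Q" and nnQ: "AE x in Q. 0 \<le> x"
    and U: "U \<subseteq> {w. Re w < 0}" "p islimpt U" "Re p < 0"
    and eq: "\<And>w. w \<in> U \<Longrightarrow> lapl P w = lapl Q w"
  shows "P = Q"
proof -
  have H: "lapl P w = lapl Q w" if "Re w < 0" for w
  proof -
    have "lapl P w - lapl Q w = 0"
    proof (rule analytic_continuation[where f="\<lambda>w. lapl P w - lapl Q w" and S="{w. Re w < 0}" and U=U and \<xi>=p])
      show "(\<lambda>w. lapl P w - lapl Q w) holomorphic_on {w. Re w < 0}"
        by (intro holomorphic_intros lapl_holo P Q nnP nnQ)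
      show "connected {w. Re w < 0}" by (intro convex_connected convex_halfspace_Re_lt)
    qed (use U eq that in \<open>auto simp: open_halfspace_Re_lt\<close>)
    thus ?thesis by simp
  qed
  have "char P t = char Q t" for t
  proof -
    have "(\<lambda>k. lapl P (complex_of_real (- 1 / Suc k) + \<i> * complex_of_real t)) \<longlonglongrightarrow> char Q t"
      using char_as_lapl_limit[OF Q nnQ, of t] by (subst (asm) H[symmetric]) auto
    from LIMSEQ_unique[OF char_as_lapl_limit[OF P nnP] this] show ?thesis .
  qed
  thus ?thesis using Levy_uniqueness[OF P Q] by blast
qed

definition ipart :: "real \<Rightarrow> real \<Rightarrow> complex" where
  "ipart z x = iexp (z * x) - 1 - \<i> * complex_of_real (z * x) * indicator {-1..1} x"

lemma ipart_meas [measurable]: "ipart z \<in> borel_measurable borel"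
  unfolding ipart_def by measurable

lemma ipart_bound: "cmod (ipart z x) \<le> (z\<^sup>2 + 2) * min 1 (x\<^sup>2)"
proof (cases "\<bar>x\<bar> \<le> 1")
  case True
  have x2: "x\<^sup>2 \<le> 1" using True by (simp add: abs_square_le_1)
  have "ipart z x = iexp (z * x) - (\<Sum>k\<le>1. (\<i> * complex_of_real (z * x)) ^ k / fact k)"
    using True by (simp add: ipart_def indicator_def abs_le_iff)
  hence "cmod (ipart z x) \<le> \<bar>z * x\<bar> ^ 2 / 2"
    using iexp_approx1[of "z * x" 1] by (simp add: numeral_2_eq_2)
  also have "\<dots> = z\<^sup>2 * x\<^sup>2 / 2" by (simp add: power_mult_distrib)
  also have "\<dots> \<le> (z\<^sup>2 + 2) * x\<^sup>2" by (simp add: field_simps)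
  finally show ?thesis using x2 by (simp add: min_def)
next
  case False
  have x2: "1 \<le> x\<^sup>2" using False abs_square_le_1[of x] by linarith
  have "ipart z x = iexp (z * x) - 1"
    using False by (auto simp: ipart_def indicator_def abs_le_iff)
  hence "cmod (ipart z x) \<le> cmod (iexp (z * x)) + 1"
    by (metis norm_one norm_triangle_ineq4)
  also have "\<dots> = 2" by simp
  also have "\<dots> \<le> (z\<^sup>2 + 2)" by simp
  finally show ?thesis using x2 by (simp add: min_def)
qed

lemma levy_min_integrable:
  assumes "levy_measure \<nu>"
  shows "integrable \<nu> (\<lambda>x. min 1 (x\<^sup>2))"
proof -
  have s: "sets \<nu> = sets borel" using assms by (simp add: levy_measure_def)
  show ?thesis
    unfolding integrable_iff_bounded
    using assms by (auto simp: levy_measure_def measurable_cong_sets[OF s refl])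
qed

lemma ipart_integrable:
  assumes "levy_measure \<nu>"
  shows "integrable \<nu> (ipart z)"
proof -
  have s: "sets \<nu> = sets borel" using assms by (simp add: levy_measure_def)
  show ?thesis
  proof (rule Bochner_Integration.integrable_bound[OF integrable_mult_right[OF levy_min_integrable[OF assms], of "z\<^sup>2 + 2"]])
    show "ipart z \<in> borel_measurable \<nu>" by (simp add: measurable_cong_sets[OF s refl])
    show "AE x in \<nu>. norm (ipart z x) \<le> norm ((z\<^sup>2 + 2) * min 1 (x\<^sup>2))"
      using ipart_bound[of z] by (intro AE_I2) (simp add: abs_of_nonneg)
  qed
qed

lemma levy_exponent_ipart:
  "levy_exponent \<gamma> b \<nu> z = \<i> * complex_of_real (z * \<gamma>) - complex_of_real (b * z\<^sup>2 / 2) + (CLINT x|\<nu>. ipart z x)"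
  unfolding levy_exponent_def ipart_def ..

lemma levy_exponent_0: "levy_exponent \<gamma> b \<nu> 0 = 0"
  unfolding levy_exponent_def by simp

lemma levy_exponent_cont:
  assumes "levy_measure \<nu>"
  shows "continuous_on UNIV (levy_exponent \<gamma> b \<nu>)"
proof -
  have s: "sets \<nu> = sets borel" using assms by (simp add: levy_measure_def)
  have "isCont (\<lambda>z. CLINT x|\<nu>. ipart z x) z" for z
  proof -
    define R where "R = (\<bar>z\<bar> + 1)\<^sup>2 + 2"
    have "((\<lambda>y. CLINT x|\<nu>. ipart y x) \<longlongrightarrow> (CLINT x|\<nu>. ipart z x)) (at z within ball z 1)"
    proof (rule tendsto_integral_within[where w="\<lambda>x. R * min 1 (x\<^sup>2)"])
      show "ipart y \<in> borel_measurable \<nu>" for y by (simp add: measurable_cong_sets[OF s refl])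
      thus "ipart z \<in> borel_measurable \<nu>" .
      show "integrable \<nu> (\<lambda>x. R * min 1 (x\<^sup>2))" using levy_min_integrable[OF assms] by simp
      show "AE x in \<nu>. cmod (ipart y x) \<le> R * min 1 (x\<^sup>2)" if "y \<in> ball z 1" for y
      proof (intro AE_I2)
        fix x
        have "\<bar>y\<bar> \<le> \<bar>z\<bar> + 1" using that by (auto simp: dist_real_def)
        hence "y\<^sup>2 \<le> (\<bar>z\<bar> + 1)\<^sup>2" by (metis abs_ge_zero power2_abs power_mono)
        hence "(y\<^sup>2 + 2) * min 1 (x\<^sup>2) \<le> R * min 1 (x\<^sup>2)" unfolding R_def
          by (intro mult_right_mono) auto
        thus "cmod (ipart y x) \<le> R * min 1 (x\<^sup>2)" using ipart_bound[of y x] by linarith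
      qed
      show "AE x in \<nu>. ((\<lambda>y. ipart y x) \<longlongrightarrow> ipart z x) (at z within ball z 1)"
        by (intro AE_I2) (auto simp: ipart_def intro!: tendsto_intros)
    qed
    thus ?thesis using at_within_open[of z "ball z 1"] by (simp add: isCont_def)
  qed
  thus ?thesis
    unfolding levy_exponent_ipart continuous_on_eq_continuous_at[OF open_UNIV]
    by (auto intro!: continuous_intros)
qed


lemma Re_ipart: "Re (ipart z x) = cos (z * x) - 1"
  by (simp add: ipart_def indicator_def Re_exp)

lemma levy_exponent_Re:
  assumes "levy_measure \<nu>"
  shows "Re (levy_exponent \<gamma> b \<nu> z) = - (b * z\<^sup>2 / 2) + (LINT x|\<nu>. cos (z * x) - 1)"
proof -
  have "Re (CLINT x|\<nu>. ipart z x) = (LINT x|\<nu>. Re (ipart z x))"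
    using ipart_integrable[OF assms] by simp
  thus ?thesis unfolding levy_exponent_ipart by (simp add: Re_ipart)
qed

lemma levy_degenerate:
  assumes nu: "levy_measure \<nu>" and b: "b \<ge> 0" and Re0: "\<And>z. Re (levy_exponent \<gamma> b \<nu> z) = 0"
  shows "levy_exponent \<gamma> b \<nu> z = \<i> * complex_of_real (z * \<gamma>)"
proof -
  have s: "sets \<nu> = sets borel" using nu by (simp add: levy_measure_def)
  have key: "b = 0 \<and> (AE x in \<nu>. cos (y * x) = 1)" if "y \<noteq> 0" for y
  proof -
    have int: "integrable \<nu> (\<lambda>x. 1 - cos (y * x))"
    proof -
      have "integrable \<nu> (\<lambda>x. - Re (ipart y x))" using ipart_integrable[OF nu] by auto
      thus ?thesis by (simp add: Re_ipart)
    qed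
    have I: "(LINT x|\<nu>. cos (y * x) - 1) = - (LINT x|\<nu>. 1 - cos (y * x))"
      by (subst integral_minus[symmetric]) simp
    have nn: "0 \<le> (LINT x|\<nu>. 1 - cos (y * x))"
      by (intro integral_nonneg_AE AE_I2) simp
    have "0 = - (b * y\<^sup>2 / 2) - (LINT x|\<nu>. 1 - cos (y * x))"
      using Re0[of y] levy_exponent_Re[OF nu, of \<gamma> b y] I by simp
    moreover have "0 \<le> b * y\<^sup>2 / 2" using b by simp
    ultimately have "b * y\<^sup>2 = 0" "(LINT x|\<nu>. 1 - cos (y * x)) = 0" using nn by linarith+
    hence "b = 0" "AE x in \<nu>. 1 - cos (y * x) = 0"
      using that integral_nonneg_eq_0_iff_AE[OF int] by auto
    thus ?thesis by auto
  qed
  have b0: "b = 0" using key[of 1] by simp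
  have "AE x in \<nu>. \<forall>k::nat. cos (1 / real (Suc k) * x) = 1"
    unfolding AE_all_countable
  proof
    fix k :: nat
    have "1 / real (Suc k) \<noteq> 0" by simp
    from key[OF this] show "AE x in \<nu>. cos (1 / real (Suc k) * x) = 1" by simp
  qed
  moreover have "AE x in \<nu>. x \<noteq> 0"
  proof (rule AE_I'[of "{0}"])
    show "{0} \<in> null_sets \<nu>" using nu s by (auto simp: levy_measure_def null_sets_def)
  qed auto
  ultimately have "AE x in \<nu>. False"
  proof eventually_elim
    case (elim x)
    obtain k :: nat where k: "\<bar>x\<bar> / (2 * pi) < real k" using reals_Archimedean2 by blast
    have "cos (x / real (Suc k)) = 1" using elim(1)[rule_format, of k] by simp
    then obtain n :: int where n: "x / real (Suc k) = n * 2 * pi" by (auto simp: cos_one_2pi_int)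
    have "\<bar>x\<bar> < 2 * pi * real (Suc k)" using k pi_gt_zero by (simp add: field_simps) (smt (verit) pi_gt_zero)
    hence lt: "\<bar>x / real (Suc k)\<bar> < 2 * pi" by (simp add: field_simps)
    have e: "\<bar>x / real (Suc k)\<bar> = \<bar>real_of_int n\<bar> * (2 * pi)"
      unfolding n using pi_gt_zero by (simp add: abs_mult)
    have "\<bar>real_of_int n\<bar> * (2 * pi) < 1 * (2 * pi)" using e lt by linarith
    hence "\<bar>real_of_int n\<bar> < 1" using mult_less_cancel_right_pos[of "2 * pi" "\<bar>real_of_int n\<bar>" 1] pi_gt_zero by linarith
    hence "n = 0" by linarith
    thus False using n elim(2) by simp
  qed
  hence "(CLINT x|\<nu>. ipart z x) = 0"
    by (intro integral_eq_zero_AE) (auto elim: AE_mp)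
  thus ?thesis unfolding levy_exponent_ipart using b0 by simp
qed

lemma real_distribution_return0: "real_distribution (return borel (0::real))"
  unfolding real_distribution_def real_distribution_axioms_def
  by (simp add: prob_space_return)

lemma char_return0: "char (return borel (0::real)) t = 1"
  unfolding char_def by (simp add: integral_return)

lemma oneD:
  assumes P: "real_distribution P" and nnP: "AE x in P. 0 \<le> x"
    and Q: "real_distribution Q" and nnQ: "AE x in Q. 0 \<le> x"
    and nu: "levy_measure \<nu>" and b: "b \<ge> 0"
    and mu: "id_law_of_triplet \<mu> \<gamma> b \<nu>" and mu0: "\<mu> \<noteq> return borel 0"
    and eq: "\<And>z. lapl P (levy_exponent \<gamma> b \<nu> z) = lapl Q (levy_exponent \<gamma> b \<nu> z)"
  shows "P = Q"
proof -
  define \<psi> where "\<psi> = levy_exponent \<gamma> b \<nu>"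
  have muD: "real_distribution \<mu>" "\<And>z. char \<mu> z = exp (\<psi> z)"
    using mu by (auto simp: id_law_of_triplet_def real_distribution_def real_distribution_axioms_def \<psi>_def)
  have Rle: "Re (\<psi> z) \<le> 0" for z
  proof -
    have "exp (Re (\<psi> z)) \<le> 1"
      using real_distribution.cmod_char_le_1[OF muD(1), of z] muD(2)[of z] by (simp add: norm_exp_eq_Re)
    thus ?thesis by simp
  qed
  show ?thesis
  proof (cases "\<exists>z0. Re (\<psi> z0) < 0")
    case True
    then obtain z0 where z0: "Re (\<psi> z0) < 0" by blast
    have cont: "continuous_on UNIV \<psi>" unfolding \<psi>_def by (rule levy_exponent_cont[OF nu])
    have "\<psi> z0 islimpt range \<psi>"
    proof (rule connected_imp_perfect)
      show "connected (range \<psi>)" by (intro connected_continuous_image cont connected_UNIV)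
      show "range \<psi> \<noteq> {x}" for x
      proof
        assume "range \<psi> = {x}"
        hence "\<psi> 0 = x" "\<psi> z0 = x" by auto
        thus False using z0 levy_exponent_0[of \<gamma> b \<nu>] by (simp add: \<psi>_def)
      qed
    qed auto
    hence lim: "\<psi> z0 islimpt (range \<psi> \<inter> {w. Re w < 0})"
      by (rule islimpt_Int_eventually) (intro eventually_at_in_open' open_halfspace_Re_lt, use z0 in simp)
    show ?thesis
      by (rule lapl_unique[OF P nnP Q nnQ _ lim z0]) (auto simp: eq \<psi>_def)
  next
    case False
    hence Re0: "Re (\<psi> z) = 0" for z using Rle[of z] by (simp add: not_less) (meson order.antisym)
    have lin: "\<psi> z = \<i> * complex_of_real (z * \<gamma>)" for z
      unfolding \<psi>_def by (rule levy_degenerate[OF nu b]) (use Re0 in \<open>simp add: \<psi>_def\<close>)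
    have g: "\<gamma> \<noteq> 0"
    proof
      assume "\<gamma> = 0"
      hence "char \<mu> = char (return borel 0)" using muD(2) lin by (auto simp: char_return0)
      hence "\<mu> = return borel 0" by (rule Levy_uniqueness[OF muD(1) real_distribution_return0])
      thus False using mu0 by simp
    qed
    have "char P t = char Q t" for t
    proof -
      have "lapl R (\<psi> (t / \<gamma>)) = char R t" for R
        unfolding lapl_def char_def lin using g by (simp add: mult.commute mult.left_commute)
      thus ?thesis using eq[of "t / \<gamma>"] by (simp add: \<psi>_def)
    qed
    thus ?thesis using Levy_uniqueness[OF P Q] by blast
  qed
qed

lemma space_in_field_sigma: "space M \<in> field_sigma M X"
  unfolding field_sigma_def by (rule sigma_sets_top)

lemma levy_basis_meas: "levy_basis M X \<Longrightarrow> A \<in> bborel \<Longrightarrow> (\<lambda>\<omega>. X \<omega> A) \<in> borel_measurable M"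
  unfolding levy_basis_def by blast

lemma lapl_of_sub:
  fixes T LS :: "'w \<Rightarrow> (real^'n) set \<Rightarrow> real"
  assumes M: "prob_space M" and sub: "subordinated M \<gamma> b \<nu> T LS" and T: "levy_basis M T"
    and A: "A \<in> bborel"
  shows "lapl (distr M borel (\<lambda>\<omega>. T \<omega> A)) (levy_exponent \<gamma> b \<nu> z) = char (distr M borel (\<lambda>\<omega>. LS \<omega> A)) z"
proof -
  have LS: "levy_basis M LS" using sub by (simp add: subordinated_def)
  have mT[measurable]: "(\<lambda>\<omega>. T \<omega> A) \<in> borel_measurable M" by (rule levy_basis_meas[OF T A])
  have mL[measurable]: "(\<lambda>\<omega>. LS \<omega> A) \<in> borel_measurable M" by (rule levy_basis_meas[OF LS A])
  have "\<forall>n (A :: nat \<Rightarrow> (real^'n) set) (z :: nat \<Rightarrow> real) E.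
        (\<forall>i<n. A i \<in> bborel) \<longrightarrow> disjoint_family_on A {..<n} \<longrightarrow> E \<in> field_sigma M T \<longrightarrow>
        (CLINT \<omega>|M. indicator E \<omega> * exp (\<i> * complex_of_real (\<Sum>i<n. z i * LS \<omega> (A i))))
        = (CLINT \<omega>|M. indicator E \<omega> *
             exp (\<Sum>i<n. complex_of_real (T \<omega> (A i)) * levy_exponent \<gamma> b \<nu> (z i)))"
    using sub unfolding subordinated_def by blast
  from this[rule_format, of 1 "\<lambda>_. A" "space M" "\<lambda>_. z"]
  have "(CLINT \<omega>|M. indicator (space M) \<omega> * exp (\<i> * complex_of_real (z * LS \<omega> A)))
        = (CLINT \<omega>|M. indicator (space M) \<omega> * exp (complex_of_real (T \<omega> A) * levy_exponent \<gamma> b \<nu> z))"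
    using A space_in_field_sigma[of M T] by (simp add: disjoint_family_on_def)
  also have "(CLINT \<omega>|M. indicator (space M) \<omega> * exp (complex_of_real (T \<omega> A) * levy_exponent \<gamma> b \<nu> z))
      = (CLINT \<omega>|M. exp (levy_exponent \<gamma> b \<nu> z * complex_of_real (T \<omega> A)))"
    by (intro Bochner_Integration.integral_cong) (auto simp: mult.commute)
  also have "(CLINT \<omega>|M. indicator (space M) \<omega> * exp (\<i> * complex_of_real (z * LS \<omega> A)))
      = (CLINT \<omega>|M. iexp (z * LS \<omega> A))"
    by (intro Bochner_Integration.integral_cong) auto
  finally show ?thesis
    unfolding lapl_def char_def
    by (subst (1 2) integral_distr) auto
qed

lemma fdd1:
  assumes "fdd_eq M X Y" "A \<in> bborel"
    and mX: "(\<lambda>\<omega>. X \<omega> A) \<in> borel_measurable M" and mY: "(\<lambda>\<omega>. Y \<omega> A) \<in> borel_measurable M"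
  shows "distr M borel (\<lambda>\<omega>. X \<omega> A) = distr M borel (\<lambda>\<omega>. Y \<omega> A)"
proof -
  have "distr M (PiM {..<1} (\<lambda>_. borel)) (\<lambda>\<omega>. \<lambda>i\<in>{..<1::nat}. X \<omega> A)
      = distr M (PiM {..<1} (\<lambda>_. borel)) (\<lambda>\<omega>. \<lambda>i\<in>{..<1::nat}. Y \<omega> A)"
    using assms(1)[unfolded fdd_eq_def, rule_format, of 1 "\<lambda>_. A"] assms(2) by simp
  hence "distr (distr M (PiM {..<1} (\<lambda>_. borel)) (\<lambda>\<omega>. \<lambda>i\<in>{..<1::nat}. X \<omega> A)) borel (\<lambda>f. f 0)
      = distr (distr M (PiM {..<1} (\<lambda>_. borel)) (\<lambda>\<omega>. \<lambda>i\<in>{..<1::nat}. Y \<omega> A)) borel (\<lambda>f. f 0)"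
    by simp
  also have "distr (distr M (PiM {..<1} (\<lambda>_. borel)) (\<lambda>\<omega>. \<lambda>i\<in>{..<1::nat}. X \<omega> A)) borel (\<lambda>f. f 0)
     = distr M borel (\<lambda>\<omega>. X \<omega> A)"
    by (subst distr_distr) (auto simp: comp_def mX intro!: measurable_restrict)
  also have "distr (distr M (PiM {..<1} (\<lambda>_. borel)) (\<lambda>\<omega>. \<lambda>i\<in>{..<1::nat}. Y \<omega> A)) borel (\<lambda>f. f 0)
     = distr M borel (\<lambda>\<omega>. Y \<omega> A)"
    by (subst distr_distr) (auto simp: comp_def mY intro!: measurable_restrict)
  finally show ?thesis .
qed

definition atom :: "nat \<Rightarrow> (nat \<Rightarrow> (real^'n) set) \<Rightarrow> nat \<Rightarrow> (real^'n) set" where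
  "atom n A k = (if set_decode k \<subseteq> {..<n} \<and> set_decode k \<noteq> {}
     then (\<Inter>i\<in>{..<n}. (if i \<in> set_decode k then A i else UNIV - A i)) else {})"

lemma mem_if_set: "(x \<in> (if P then S1 else S2)) = ((P \<longrightarrow> x \<in> S1) \<and> (\<not> P \<longrightarrow> x \<in> S2))"
  by simp

lemma atom_valid:
  assumes "x \<in> atom n A k"
  shows "set_decode k \<subseteq> {..<n} \<and> set_decode k \<noteq> {}"
proof (rule ccontr)
  assume "\<not> (set_decode k \<subseteq> {..<n} \<and> set_decode k \<noteq> {})"
  hence "atom n A k = {}" unfolding atom_def by (simp only: if_False)
  thus False using assms by simp
qed

lemma mem_atom:
  assumes "set_decode k \<subseteq> {..<n}" "set_decode k \<noteq> {}"
  shows "x \<in> atom n A k \<longleftrightarrow> (\<forall>i<n. (x \<in> A i) = (i \<in> set_decode k))"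
proof -
  have "atom n A k = (\<Inter>i\<in>{..<n}. (if i \<in> set_decode k then A i else UNIV - A i))"
    using assms unfolding atom_def by (simp only: simp_thms if_True)
  hence "x \<in> atom n A k \<longleftrightarrow> (\<forall>i\<in>{..<n}. x \<in> (if i \<in> set_decode k then A i else UNIV - A i))"
    by (simp only: INT_iff)
  also have "\<dots> \<longleftrightarrow> (\<forall>i<n. (x \<in> A i) = (i \<in> set_decode k))"
    unfolding mem_if_set by auto
  finally show ?thesis .
qed

lemma atom_bborel:
  assumes A: "\<forall>i<n. A i \<in> bborel"
  shows "atom n A k \<in> bborel"
proof (cases "set_decode k \<subseteq> {..<n} \<and> set_decode k \<noteq> {}")
  case True
  then obtain j where j: "j \<in> set_decode k" "j < n" by auto
  have eq: "atom n A k = (\<Inter>i\<in>{..<n}. (if i \<in> set_decode k then A i else UNIV - A i))"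
    using True unfolding atom_def by (simp only: simp_thms if_True)
  have sb: "(\<Inter>i\<in>{..<n}. (if i \<in> set_decode k then A i else UNIV - A i)) \<in> sets borel"
    by (rule sets.finite_INT) (use A j in \<open>auto simp: bborel_def\<close>)
  have sub: "atom n A k \<subseteq> A j" using True j mem_atom[of k n] by blast
  have "bounded (A j)" using A j by (simp add: bborel_def)
  hence "bounded (atom n A k)" using bounded_subset[OF _ sub] by blast
  thus ?thesis using eq sb by (simp add: bborel_def)
next
  case False
  hence "atom n A k = {}" unfolding atom_def by (simp only: if_False)
  thus ?thesis by (simp add: bborel_def)
qed

lemma atom_disj: "disjoint_family (atom n A)"
  unfolding disjoint_family_on_def
proof (intro ballI impI)
  fix k l :: nat assume "k \<noteq> l"
  show "atom n A k \<inter> atom n A l = {}"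
  proof (rule ccontr)
    assume "atom n A k \<inter> atom n A l \<noteq> {}"
    then obtain x where x: "x \<in> atom n A k" "x \<in> atom n A l" by auto
    have vk: "set_decode k \<subseteq> {..<n} \<and> set_decode k \<noteq> {}" by (rule atom_valid[OF x(1)])
    have vl: "set_decode l \<subseteq> {..<n} \<and> set_decode l \<noteq> {}" by (rule atom_valid[OF x(2)])
    have ck: "\<forall>i<n. (x \<in> A i) = (i \<in> set_decode k)" using x(1) vk mem_atom[of k n] by blast
    have cl: "\<forall>i<n. (x \<in> A i) = (i \<in> set_decode l)" using x(2) vl mem_atom[of l n] by blast
    have "set_decode k = set_decode l"
    proof (rule set_eqI)
      fix i
      show "(i \<in> set_decode k) = (i \<in> set_decode l)"
      proof (cases "i < n")
        case True thus ?thesis using ck cl by simp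
      next
        case False thus ?thesis using vk vl by auto
      qed
    qed
    hence "k = l" by (metis set_decode_inverse)
    thus False using \<open>k \<noteq> l\<close> by simp
  qed
qed

lemma atom_nonempty_lt:
  assumes "atom n A k \<noteq> {}"
  shows "k < Suc (set_encode {..<n})"
proof -
  have "set_decode k \<subseteq> {..<n}" using assms atom_valid by blast
  hence "set_encode (set_decode k) \<le> set_encode {..<n}"
    unfolding set_encode_def by (intro sum_mono2) auto
  thus ?thesis by simp
qed

lemma atom_cover:
  assumes "i < n"
  shows "A i = (\<Union>l. if l < Suc (set_encode {..<n}) \<and> i \<in> set_decode l then atom n A l else {})"
    (is "_ = ?R")
proof
  show "A i \<subseteq> ?R"
  proof
    fix x assume x: "x \<in> A i"
    define J where "J = {j. j < n \<and> x \<in> A j}"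
    have fJ: "finite J" by (simp add: J_def)
    define k where "k = set_encode J"
    have dk: "set_decode k = J" using fJ by (simp add: k_def)
    have "J \<subseteq> {..<n}" "i \<in> J" using x assms by (auto simp: J_def)
    hence xk: "x \<in> atom n A k" using mem_atom[where k=k and n=n and A=A and x=x] unfolding dk by (auto simp: J_def)
    hence "k < Suc (set_encode {..<n})" by (intro atom_nonempty_lt) auto
    moreover have "i \<in> set_decode k" using dk x assms by (simp add: J_def)
    ultimately show "x \<in> ?R" using xk by (intro UN_I[of k]) auto
  qed
next
  show "?R \<subseteq> A i"
  proof
    fix x assume "x \<in> ?R"
    then obtain l where l0: "x \<in> (if l < Suc (set_encode {..<n}) \<and> i \<in> set_decode l then atom n A l else {})"
      by blast
    hence l: "l < Suc (set_encode {..<n})" "i \<in> set_decode l" "x \<in> atom n A l"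
      by (simp_all split: if_splits)
    have vl: "set_decode l \<subseteq> {..<n} \<and> set_decode l \<noteq> {}" by (rule atom_valid[OF l(3)])
    hence "\<forall>j<n. (x \<in> A j) = (j \<in> set_decode l)" using l(3) mem_atom[of l n] by blast
    thus "x \<in> A i" using assms l(2) by blast
  qed
qed

lemma sums_const_zero: "(\<lambda>n. c) sums (d::real) \<Longrightarrow> c = 0"
proof -
  assume "(\<lambda>n. c) sums d"
  hence "(\<lambda>n. c) \<longlonglongrightarrow> 0" by (intro summable_LIMSEQ_zero) (auto simp: sums_iff)
  thus "c = 0" by (simp add: LIMSEQ_const_iff)
qed

lemma atom_decomp:
  fixes T :: "'w \<Rightarrow> (real^'n) set \<Rightarrow> real"
  assumes T: "nonneg_levy_basis M T" and A: "\<forall>i<n. A i \<in> bborel"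
  shows "AE \<omega> in M. \<forall>i<n. T \<omega> (A i) =
     (\<Sum>l<Suc (set_encode {..<n}). if i \<in> set_decode l then T \<omega> (atom n A l) else 0)"
proof -
  let ?m = "Suc (set_encode {..<n})"
  have h: "AE \<omega> in M. (\<forall>A\<in>bborel. T \<omega> A \<ge> 0) \<and>
        (\<forall>A :: nat \<Rightarrow> (real^'n) set. range A \<subseteq> bborel \<longrightarrow> disjoint_family A \<longrightarrow> bounded (\<Union>n. A n) \<longrightarrow>
           (\<lambda>n. T \<omega> (A n)) sums T \<omega> (\<Union>n. A n))"
    using T unfolding nonneg_levy_basis_def by (rule conjunct2)
  have "AE \<omega> in M. (\<forall>A :: nat \<Rightarrow> (real^'n) set. range A \<subseteq> bborel \<longrightarrow> disjoint_family A \<longrightarrow> bounded (\<Union>n. A n) \<longrightarrow>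
           (\<lambda>n. T \<omega> (A n)) sums T \<omega> (\<Union>n. A n))"
    by (rule AE_mp[OF h]) (intro AE_I2 impI, erule conjunct2)
  thus ?thesis
  proof eventually_elim
    case (elim \<omega>)
    have e: "{} \<in> bborel" by (simp add: bborel_def)
    have r0: "range (\<lambda>_::nat. {}) \<subseteq> bborel" using e by auto
    have d0: "disjoint_family (\<lambda>_::nat. ({} :: (real^'n) set))" by (simp add: disjoint_family_on_def)
    have b0: "bounded (\<Union>n::nat. ({} :: (real^'n) set))" by simp
    have "(\<lambda>n. T \<omega> {}) sums T \<omega> (\<Union>n::nat. {})" by (rule elim[rule_format, OF r0 d0 b0])
    hence T0: "T \<omega> {} = 0" by (intro sums_const_zero) simp
    show ?case
    proof (intro allI impI)
      fix i assume i: "i < n"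
      define C where "C l = (if l < ?m \<and> i \<in> set_decode l then atom n A l else {})" for l
      have r: "range C \<subseteq> bborel" using atom_bborel[OF A] e by (auto simp: C_def)
      have Csub: "C l \<subseteq> atom n A l" for l by (simp add: C_def)
      have d: "disjoint_family C"
        unfolding disjoint_family_on_def
      proof (intro ballI impI)
        fix k l :: nat assume "k \<noteq> l"
        hence "atom n A k \<inter> atom n A l = {}" using atom_disj[of n A] unfolding disjoint_family_on_def by blast
        thus "C k \<inter> C l = {}" using Csub[of k] Csub[of l] by blast
      qed
      have U: "(\<Union>l. C l) = A i" unfolding C_def using atom_cover[OF i, of A] by (rule sym)
      have "bounded (A i)" using A i by (simp add: bborel_def)
      hence b: "bounded (\<Union>l. C l)" unfolding U .
      have s1: "(\<lambda>l. T \<omega> (C l)) sums T \<omega> (A i)"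
        using elim[rule_format, OF r d b] unfolding U .
      have s2: "(\<lambda>l. T \<omega> (C l)) sums (\<Sum>l<?m. T \<omega> (C l))"
        by (rule sums_finite) (auto simp: C_def T0)
      have "T \<omega> (A i) = (\<Sum>l<?m. T \<omega> (C l))" using sums_unique2[OF s1 s2] .
      also have "\<dots> = (\<Sum>l<?m. if i \<in> set_decode l then T \<omega> (atom n A l) else 0)"
        by (intro sum.cong) (auto simp: C_def T0)
      finally show "T \<omega> (A i) = (\<Sum>l<?m. if i \<in> set_decode l then T \<omega> (atom n A l) else 0)" .
    qed
  qed
qed

lemma rd_distr:
  assumes "prob_space M" "f \<in> borel_measurable M"
  shows "real_distribution (distr M borel f)"
  unfolding real_distribution_def real_distribution_axioms_def
  using assms by (auto intro: prob_space.prob_space_distr)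

lemma vec_decomp:
  fixes X :: "'w \<Rightarrow> (real^'n) set \<Rightarrow> real"
  assumes M: "prob_space M" and X: "nonneg_levy_basis M X" and A: "\<forall>i<n. A i \<in> bborel"
  shows "distr M (PiM {..<n} (\<lambda>_. borel)) (\<lambda>\<omega>. \<lambda>i\<in>{..<n}. X \<omega> (A i))
    = distr (PiM {..<Suc (set_encode {..<n})} (\<lambda>l. distr M borel (\<lambda>\<omega>. X \<omega> (atom n A l))))
        (PiM {..<n} (\<lambda>_. borel))
        (\<lambda>f. \<lambda>i\<in>{..<n}. \<Sum>l<Suc (set_encode {..<n}). if i \<in> set_decode l then f l else 0)"
proof -
  define m where "m = Suc (set_encode {..<n})"
  define \<Phi> where "\<Phi> = (\<lambda>f::nat \<Rightarrow> real. \<lambda>i\<in>{..<n}. \<Sum>l<m. if i \<in> set_decode l then f l else 0)"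
  have XL: "levy_basis M X" using X by (simp add: nonneg_levy_basis_def)
  have mB: "(\<lambda>\<omega>. X \<omega> (atom n A l)) \<in> borel_measurable M" for l
    by (rule levy_basis_meas[OF XL atom_bborel[OF A]])
  have mA: "(\<lambda>\<omega>. X \<omega> (A i)) \<in> borel_measurable M" if "i \<in> {..<n}" for i
    using that A by (intro levy_basis_meas[OF XL]) auto
  have Bm: "(\<lambda>\<omega>. \<lambda>l\<in>{..<m}. X \<omega> (atom n A l)) \<in> measurable M (PiM {..<m} (\<lambda>_. borel))"
    by (rule measurable_restrict) (rule mB)
  have Tm: "(\<lambda>\<omega>. \<lambda>i\<in>{..<n}. X \<omega> (A i)) \<in> measurable M (PiM {..<n} (\<lambda>_. borel))"
    by (rule measurable_restrict) (rule mA)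
  have \<Phi>m: "\<Phi> \<in> measurable (PiM {..<m} (\<lambda>_. borel)) (PiM {..<n} (\<lambda>_. borel))"
    unfolding \<Phi>_def
  proof (rule measurable_restrict)
    fix i
    show "(\<lambda>f. \<Sum>l<m. if i \<in> set_decode l then f l else (0::real)) \<in> borel_measurable (PiM {..<m} (\<lambda>_. borel))"
      by measurable
  qed
  have ind: "prob_space.indep_vars M (\<lambda>_. borel) (\<lambda>l \<omega>. X \<omega> (atom n A l)) {..<m}"
  proof -
    have "independently_scattered M X" using XL by (simp add: levy_basis_def)
    hence "\<forall>(B :: nat \<Rightarrow> (real^'n) set) k. (\<forall>i<k. B i \<in> bborel) \<longrightarrow> disjoint_family_on B {..<k} \<longrightarrow>
        prob_space.indep_vars M (\<lambda>_. borel) (\<lambda>i \<omega>. X \<omega> (B i)) {..<k}"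
      unfolding independently_scattered_def by (rule conjunct1)
    moreover have "\<forall>i<m. atom n A i \<in> bborel" using atom_bborel[OF A] by blast
    moreover have "disjoint_family_on (atom n A) {..<m}"
      by (rule disjoint_family_on_mono[OF subset_UNIV atom_disj])
    ultimately show ?thesis by blast
  qed
  have D: "distr M (PiM {..<m} (\<lambda>_. borel)) (\<lambda>\<omega>. \<lambda>l\<in>{..<m}. X \<omega> (atom n A l))
      = PiM {..<m} (\<lambda>l. distr M borel (\<lambda>\<omega>. X \<omega> (atom n A l)))"
  proof -
    have ne: "{..<m} \<noteq> {}" by (auto simp: m_def)
    have rv: "\<And>l. (\<lambda>l \<omega>. X \<omega> (atom n A l)) l \<in> measurable M ((\<lambda>_. borel) l)" using mB by simp
    show ?thesis
      using iffD1[OF prob_space.indep_vars_iff_distr_eq_PiM[OF M ne rv] ind] by simp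
  qed
  have AE: "AE \<omega> in M. (\<lambda>i\<in>{..<n}. X \<omega> (A i)) = \<Phi> (\<lambda>l\<in>{..<m}. X \<omega> (atom n A l))"
    using atom_decomp[OF X A]
  proof eventually_elim
    case (elim \<omega>)
    show ?case
    proof (rule ext)
      fix i
      show "(\<lambda>i\<in>{..<n}. X \<omega> (A i)) i = \<Phi> (\<lambda>l\<in>{..<m}. X \<omega> (atom n A l)) i"
      proof (cases "i < n")
        case True
        have "(\<lambda>i\<in>{..<n}. X \<omega> (A i)) i = X \<omega> (A i)" using True by simp
        also have "\<dots> = (\<Sum>l<m. if i \<in> set_decode l then X \<omega> (atom n A l) else 0)"
          using elim[rule_format, OF True] unfolding m_def .
        also have "\<dots> = (\<Sum>l<m. if i \<in> set_decode l then (\<lambda>l\<in>{..<m}. X \<omega> (atom n A l)) l else 0)"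
          by (intro sum.cong) auto
        also have "\<dots> = \<Phi> (\<lambda>l\<in>{..<m}. X \<omega> (atom n A l)) i" using True by (simp add: \<Phi>_def)
        finally show ?thesis .
      next
        case False thus ?thesis by (simp add: \<Phi>_def)
      qed
    qed
  qed
  have "distr M (PiM {..<n} (\<lambda>_. borel)) (\<lambda>\<omega>. \<lambda>i\<in>{..<n}. X \<omega> (A i))
      = distr M (PiM {..<n} (\<lambda>_. borel)) (\<lambda>\<omega>. \<Phi> (\<lambda>l\<in>{..<m}. X \<omega> (atom n A l)))"
    by (rule distr_cong_AE[OF refl refl AE Tm]) (rule measurable_comp[OF Bm \<Phi>m, unfolded comp_def])
  also have "\<dots> = distr (distr M (PiM {..<m} (\<lambda>_. borel)) (\<lambda>\<omega>. \<lambda>l\<in>{..<m}. X \<omega> (atom n A l)))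
      (PiM {..<n} (\<lambda>_. borel)) \<Phi>"
    by (subst distr_distr[OF \<Phi>m Bm]) (simp add: comp_def)
  also have "\<dots> = distr (PiM {..<m} (\<lambda>l. distr M borel (\<lambda>\<omega>. X \<omega> (atom n A l)))) (PiM {..<n} (\<lambda>_. borel)) \<Phi>"
    unfolding D ..
  finally show ?thesis unfolding \<Phi>_def m_def .
qed

theorem theorem5p1:
  fixes M :: "'w measure"
    and L T T' LS LS' :: "'w \<Rightarrow> (real^'n) set \<Rightarrow> real"
    and \<gamma> b :: real and \<nu> \<mu> :: "real measure"
  assumes "prob_space M"
    and "homogeneous_levy_basis M L \<gamma> b \<nu>"
    and "id_law_of_triplet \<mu> \<gamma> b \<nu>"
    and "\<mu> \<noteq> return borel 0"
    and "nonneg_levy_basis M T" and "continuous_control_measure M T"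
    and "nonneg_levy_basis M T'" and "continuous_control_measure M T'"
    and "indep_fields M T L" and "indep_fields M T' L"
    and "subordinated M \<gamma> b \<nu> T LS" and "subordinated M \<gamma> b \<nu> T' LS'"
    and "fdd_eq M LS LS'"
  shows "fdd_eq M T T'"
proof -
  note M = assms(1)
  have b: "b \<ge> 0" and nu: "levy_measure \<nu>" using assms(2) by (auto simp: homogeneous_levy_basis_def)
  have TL: "levy_basis M T" using assms(5) by (simp add: nonneg_levy_basis_def)
  have T'L: "levy_basis M T'" using assms(7) by (simp add: nonneg_levy_basis_def)
  have LSL: "levy_basis M LS" using assms(11) by (simp add: subordinated_def)
  have LS'L: "levy_basis M LS'" using assms(12) by (simp add: subordinated_def)
  have nnAE: "AE x in distr M borel (\<lambda>\<omega>. X \<omega> B). 0 \<le> x"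
    if X: "nonneg_levy_basis M X" and B: "B \<in> bborel" for X :: "'w \<Rightarrow> (real^'n) set \<Rightarrow> real" and B
  proof -
    have XL: "levy_basis M X" using X by (simp add: nonneg_levy_basis_def)
    have m: "(\<lambda>\<omega>. X \<omega> B) \<in> borel_measurable M" by (rule levy_basis_meas[OF XL B])
    have h: "AE \<omega> in M. (\<forall>A\<in>bborel. X \<omega> A \<ge> 0) \<and>
        (\<forall>A :: nat \<Rightarrow> (real^'n) set. range A \<subseteq> bborel \<longrightarrow> disjoint_family A \<longrightarrow> bounded (\<Union>n. A n) \<longrightarrow>
           (\<lambda>n. X \<omega> (A n)) sums X \<omega> (\<Union>n. A n))"
      using X unfolding nonneg_levy_basis_def by (rule conjunct2)
    have "AE \<omega> in M. 0 \<le> X \<omega> B"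
      by (rule AE_mp[OF h]) (intro AE_I2 impI, use B in blast)
    thus ?thesis by (subst AE_distr_iff[OF m]) auto
  qed
  have marg: "distr M borel (\<lambda>\<omega>. T \<omega> B) = distr M borel (\<lambda>\<omega>. T' \<omega> B)" if B: "B \<in> bborel" for B
  proof (rule oneD[OF _ _ _ _ nu b assms(3) assms(4)])
    show "real_distribution (distr M borel (\<lambda>\<omega>. T \<omega> B))"
      by (rule rd_distr[OF M levy_basis_meas[OF TL B]])
    show "real_distribution (distr M borel (\<lambda>\<omega>. T' \<omega> B))"
      by (rule rd_distr[OF M levy_basis_meas[OF T'L B]])
    show "AE x in distr M borel (\<lambda>\<omega>. T \<omega> B). 0 \<le> x" by (rule nnAE[OF assms(5) B])
    show "AE x in distr M borel (\<lambda>\<omega>. T' \<omega> B). 0 \<le> x" by (rule nnAE[OF assms(7) B])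
    fix z
    have "distr M borel (\<lambda>\<omega>. LS \<omega> B) = distr M borel (\<lambda>\<omega>. LS' \<omega> B)"
      by (rule fdd1[OF assms(13) B levy_basis_meas[OF LSL B] levy_basis_meas[OF LS'L B]])
    thus "lapl (distr M borel (\<lambda>\<omega>. T \<omega> B)) (levy_exponent \<gamma> b \<nu> z)
        = lapl (distr M borel (\<lambda>\<omega>. T' \<omega> B)) (levy_exponent \<gamma> b \<nu> z)"
      using lapl_of_sub[OF M assms(11) TL B, of z] lapl_of_sub[OF M assms(12) T'L B, of z] by simp
  qed
  show ?thesis
    unfolding fdd_eq_def
  proof (intro allI impI)
    fix n and A :: "nat \<Rightarrow> (real^'n) set"
    assume A: "\<forall>i<n. A i \<in> bborel"
    have "PiM {..<Suc (set_encode {..<n})} (\<lambda>l. distr M borel (\<lambda>\<omega>. T \<omega> (atom n A l)))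
        = PiM {..<Suc (set_encode {..<n})} (\<lambda>l. distr M borel (\<lambda>\<omega>. T' \<omega> (atom n A l)))"
      by (intro PiM_cong refl marg atom_bborel[OF A])
    thus "distr M (PiM {..<n} (\<lambda>_. borel)) (\<lambda>\<omega>. \<lambda>i\<in>{..<n}. T \<omega> (A i))
        = distr M (PiM {..<n} (\<lambda>_. borel)) (\<lambda>\<omega>. \<lambda>i\<in>{..<n}. T' \<omega> (A i))"
      unfolding vec_decomp[OF M assms(5) A] vec_decomp[OF M assms(7) A] by simp
  qed
qed

end
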